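(* Consider the following model. Fix $n\ge 1$, a vector $\mu\in\mathbb R^n$, $n\times n$ matrices $A,B,C$, a positive definite initial covariance matrix $\Sigma_0$, and an initial price vector $\vec S_0=(S_0^1,\dots,S_0^n)^\top$ with positive entries. Returns and covariances evolve by $$R_{t+1}=\mu+Z_{t+1},\qquad \Sigma_{t+1}=CC^\top+A\Sigma_tA^\top+BZ_{t+1}Z_{t+1}^\top B^\top,$$ where, conditionally on the past, $Z_{t+1}$ has mean $0$ and covariance $\Sigma_t$. Prices evolve by $S^i_{t+1}=h(S^i_t,R^i_{t+1})$ for $1\le i\le n$, for a given function $h$. Set $\Psi_t=\mathrm{diag}(\vec S_t)$ and $P_t=\Psi_t\Sigma_t\Psi_t$. Let $\gamma>0$, $\epsilon>0$, and let $q:\mathbb R^n\times\mathbb R^{n\times n}\to\mathbb R^+$ be a given function. Define $\widetilde P_t=\frac{\gamma}{\epsilon q(\vec S_t,P_t)}P_t$. Assume: (i) $C$ has full rank, so that $c:=\inf_{\|v\|=1}v^\top CC^\top v>0$; (ii) $\|h\|_\infty=\sup_{s,r}|h(s,r)|<\infty$, and there is a constant $\underline s>0$ with $\inf_{s,r}h(s,r)\ge \underline s$; (iii) there is a constant $\chi<\infty$ with $1\le q(s,p)\le\chi$ for all $(s,p)\in\mathbb R^n\times\mathbb R^{n\times n}$. If $\epsilon\chi\|h\|_\infty<\gamma\underline s^2c$, then, writing $\kappa=\chi\|h\|_\infty/(\gamma\underline s^2c)$, $$\sup_t\left\|\left(I+\widetilde P_t\Psi_t^{-1}\right)^{-1}\right\|\le\frac{\epsilon\kappa}{1-\epsilon^2\kappa^2}.$$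 Consequently, for any $\delta\in[0,1)$ and all $\epsilon>0$ small enough, there is a constant $\Delta(\epsilon)<1$ such that $\delta\|(I+\widetilde P_t\Psi_t^{-1})^{-1}\|\le\Delta(\epsilon)$ for all $t$.
   Context: $\|\cdot\|$ denotes the Euclidean norm on vectors and the induced operator (spectral) norm on matrices. $\mathrm{diag}(\vec S_t)$ is the diagonal matrix whose diagonal entries are the entries of $\vec S_t$. *)

theory Defs
  imports "HOL-Analysis.Analysis"
begin

definition diag_mat :: "real^'n \<Rightarrow> real^'n^'n" where
  "diag_mat s = (\<chi> i j. if i = j then s $ i else 0)"

definition outer :: "real^'n \<Rightarrow> real^'n^'n" where
  "outer z = (\<chi> i j. z $ i * z $ j)"

definition opnorm :: "real^'n^'n \<Rightarrow> real" where
  "opnorm M = onorm (\<lambda>x. M *v x)"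

definition pos_def_mat :: "real^'n^'n \<Rightarrow> bool" where
  "pos_def_mat M \<longleftrightarrow> transpose M = M \<and> (\<forall>v. v \<noteq> 0 \<longrightarrow> v \<bullet> (M *v v) > 0)"

definition cmin :: "real^'n^'n \<Rightarrow> real" where
  "cmin C = Inf ((\<lambda>v. v \<bullet> ((C ** transpose C) *v v)) ` {v. norm v = 1})"

definition hsup :: "(real \<Rightarrow> real \<Rightarrow> real) \<Rightarrow> real" where
  "hsup h = (SUP p. \<bar>h (fst p) (snd p)\<bar>)"

end

theory Submission imports Defs "HOL-Analysis.Analysis" begin



lemma minv_props:
  fixes A :: "real^'n^'n"
  assumes "invertible A"
  shows "A ** matrix_inv A = mat 1 \<and> matrix_inv A ** A = mat 1"
  using assms unfolding invertible_def matrix_inv_def by (rule someI_ex)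

lemma minv_unique:
  fixes A B :: "real^'n^'n"
  assumes "A ** B = mat 1" "B ** A = mat 1"
  shows "matrix_inv A = B"
proof -
  have inv: "invertible A" using assms unfolding invertible_def by blast
  from minv_props[OF inv] have "matrix_inv A ** A = mat 1" by blast
  hence "matrix_inv A = matrix_inv A ** (A ** B)" using assms by simp
  also have "\<dots> = (matrix_inv A ** A) ** B" by (simp add: matrix_mul_assoc)
  also have "\<dots> = B" using \<open>matrix_inv A ** A = mat 1\<close> by simp
  finally show ?thesis .
qed

lemma diag_mul: "diag_mat d ** diag_mat e = diag_mat (\<chi> i. d$i * e$i)"
proof -
  have "\<And>i j. (\<Sum>k\<in>UNIV. (if i = k then d$i else 0) * (if k = j then e$k else 0))
     = (\<Sum>k\<in>UNIV. if k = i then (if i = j then d$i * e$i else 0) else 0)"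
    by (rule sum.cong) auto
  then show ?thesis
  unfolding diag_mat_def matrix_matrix_mult_def
  by (simp add: vec_eq_iff)
qed

lemma diag_mat_one: "diag_mat (\<chi> i. 1) = mat 1"
  unfolding diag_mat_def mat_def by (simp add: vec_eq_iff)

lemma diag_inv:
  assumes "\<forall>i. d$i \<noteq> (0::real)"
  shows "matrix_inv (diag_mat d) = diag_mat (\<chi> i. 1 / d$i)"
  apply (rule minv_unique)
  using assms by (simp_all add: diag_mul diag_mat_one[symmetric])

lemma diag_mulv: "diag_mat d *v y = (\<chi> i. d$i * y$i)"
proof -
  have "\<And>i. (\<Sum>k\<in>UNIV. (if i = k then d$i else 0) * y$k)
     = (\<Sum>k\<in>UNIV. if k = i then d$i * y$i else 0)"
    by (rule sum.cong) auto
  then show ?thesis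
  unfolding diag_mat_def matrix_vector_mult_def
  by (simp add: vec_eq_iff)
qed

lemma quad_sandwich:
  fixes P Q :: "real^'n^'n"
  shows "x \<bullet> ((P ** Q ** transpose P) *v x) = (transpose P *v x) \<bullet> (Q *v (transpose P *v x))"
proof -
  have "x \<bullet> ((P ** Q ** transpose P) *v x) = x \<bullet> (P *v (Q *v (transpose P *v x)))"
    by (simp add: matrix_vector_mul_assoc[symmetric] matrix_mul_assoc)
  also have "\<dots> = (x v* P) \<bullet> (Q *v (transpose P *v x))"
    by (simp add: dot_lmul_matrix)
  also have "x v* P = transpose P *v x"
    by (metis transpose_transpose vector_transpose_matrix)
  finally show ?thesis .
qed

lemma outer_mulv: "outer z *v y = (z \<bullet> y) *\<^sub>R z"
  unfolding outer_def matrix_vector_mult_def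
  by (simp add: vec_eq_iff inner_vec_def sum_distrib_left mult.commute mult.left_commute)

lemma outer_quad: "x \<bullet> (outer z *v x) = (z \<bullet> x)^2"
  by (simp add: outer_mulv power2_eq_square inner_commute)


lemma key_lower:
  fixes d x :: "real^'n" and Sg :: "real^'n^'n"
  assumes d: "\<forall>i. d$i \<ge> s" and s: "s > 0" and a: "a > 0"
    and Sg: "\<forall>v. v \<bullet> (Sg *v v) \<ge> c * (norm v)^2"
  shows "a * c * s * norm x \<le> norm ((mat 1 + a *\<^sub>R (diag_mat d ** Sg)) *v x)"
proof -
  define y where "y = Sg *v x"
  define w where "w = (mat 1 + a *\<^sub>R (diag_mat d ** Sg)) *v x"
  define u where "u = (\<chi> i. x$i / d$i)"
  have dpos: "\<And>i. d$i > 0" using d s by (meson less_le_trans)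
  have sc: "\<And>(M::real^'n^'n) v. (a *\<^sub>R M) *v v = a *\<^sub>R (M *v v)"
    by (simp add: matrix_vector_mult_def vec_eq_iff sum_distrib_left mult.assoc)
  have w: "w = x + a *\<^sub>R (\<chi> i. d$i * y$i)"
    unfolding w_def y_def
    by (simp add: matrix_vector_mult_add_rdistrib sc
        matrix_vector_mul_assoc[symmetric] diag_mulv)
  have uw: "u \<bullet> w = (\<Sum>i\<in>UNIV. x$i^2 / d$i) + a * (x \<bullet> y)"
  proof -
    have "u \<bullet> w = (\<Sum>i\<in>UNIV. x$i^2 / d$i + a * (x$i * y$i))"
      unfolding inner_vec_def u_def w
      apply (rule sum.cong, simp)
      subgoal for i using dpos[of i] by (simp add: field_simps power2_eq_square)
      done
    also have "\<dots> = (\<Sum>i\<in>UNIV. x$i^2 / d$i) + a * (x \<bullet> y)"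
      by (simp add: sum.distrib sum_distrib_left inner_vec_def)
    finally show ?thesis .
  qed
  have "(\<Sum>i\<in>UNIV. x$i^2 / d$i) \<ge> 0"
    using dpos by (intro sum_nonneg) (simp add: less_imp_le)
  moreover have "x \<bullet> y \<ge> c * (norm x)^2" using Sg y_def by simp
  ultimately have low: "u \<bullet> w \<ge> a * c * (norm x)^2"
    using uw a by (smt (verit, ccfv_SIG) mult_left_mono mult.assoc)
  have "(norm u)^2 \<le> (norm x / s)^2"
  proof -
    have "(norm u)^2 = u \<bullet> u" by (rule power2_norm_eq_inner)
    also have "\<dots> = (\<Sum>i\<in>UNIV. (x$i / d$i)^2)"
      by (simp add: inner_vec_def u_def power2_eq_square)
    also have "\<dots> \<le> (\<Sum>i\<in>UNIV. (x$i / s)^2)"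
    proof (rule sum_mono)
      fix i
      have ds: "s^2 \<le> (d$i)^2" using d s by (simp add: power_mono less_imp_le)
      have "(x$i / d$i)^2 = (x$i)^2 / (d$i)^2" by (simp add: power_divide)
      also have "\<dots> \<le> (x$i)^2 / s^2"
        by (rule divide_left_mono[OF ds]) (use s dpos[of i] in auto)
      also have "\<dots> = (x$i / s)^2" by (simp add: power_divide)
      finally show "(x$i / d$i)^2 \<le> (x$i / s)^2" .
    qed
    also have "\<dots> = (\<Sum>i\<in>UNIV. (x$i)^2) / s^2"
      by (simp add: power_divide sum_divide_distrib)
    also have "(\<Sum>i\<in>UNIV. (x$i)^2) = x \<bullet> x"
      by (simp add: inner_vec_def power2_eq_square)
    also have "x \<bullet> x = (norm x)^2" by (rule power2_norm_eq_inner[symmetric])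
    also have "(norm x)^2 / s^2 = (norm x / s)^2" by (simp add: power_divide)
    finally show ?thesis .
  qed
  hence nu: "norm u \<le> norm x / s"
    by (rule power2_le_imp_le) (use s in auto)
  have "u \<bullet> w \<le> norm u * norm w" by (rule norm_cauchy_schwarz)
  also have "\<dots> \<le> norm x / s * norm w" by (rule mult_right_mono[OF nu], simp)
  finally have "a * c * (norm x)^2 \<le> norm x / s * norm w" using low by linarith
  hence "s * (a * c * (norm x)^2) \<le> s * (norm x / s * norm w)" using s by (intro mult_left_mono) auto
  hence "norm x * (a * c * s * norm x) \<le> norm x * norm w" using s by (simp add: power2_eq_square algebra_simps)
  hence "norm x = 0 \<or> a * c * s * norm x \<le> norm w"
    by (metis mult_le_cancel_left norm_ge_zero order_le_less)
  thus ?thesis unfolding w_def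
    by (cases "x = 0") auto
qed

lemma opnorm_inv_bound:
  fixes M :: "real^'n^'n"
  assumes K: "K > 0" and low: "\<forall>x. K * norm x \<le> norm (M *v x)"
  shows "opnorm (matrix_inv M) \<le> 1 / K"
proof -
  have "inj ((*v) M)"
  proof (rule injI)
    fix x y assume "M *v x = M *v y"
    hence "M *v (x - y) = 0" by (simp add: matrix_vector_mult_diff_distrib)
    hence "K * norm (x - y) \<le> 0" using low by (metis norm_zero)
    thus "x = y" using K by (simp add: mult_le_0_iff)
  qed
  then obtain B where "B ** M = mat 1" using matrix_left_invertible_injective by blast
  moreover hence "M ** B = mat 1" using matrix_left_right_inverse by blast
  ultimately have inv: "invertible M" unfolding invertible_def by blast
  have MB: "M ** matrix_inv M = mat 1" using minv_props[OF inv] by blast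
  show ?thesis unfolding opnorm_def
  proof (rule onorm_le)
    fix y
    have "M *v (matrix_inv M *v y) = y" by (simp add: matrix_vector_mul_assoc MB)
    hence "K * norm (matrix_inv M *v y) \<le> norm y" using low by metis
    thus "norm (matrix_inv M *v y) \<le> 1 / K * norm y" using K by (simp add: field_simps)
  qed
qed


lemma scaleR_mmul: "((a::real) *\<^sub>R (M::real^'n^'n)) ** N = a *\<^sub>R (M ** N)"
  by (simp add: matrix_matrix_mult_def vec_eq_iff sum_distrib_left mult.assoc)

lemma cmin_lower:
  fixes C :: "real^'n^'n"
  shows "x \<bullet> ((C ** transpose C) *v x) \<ge> cmin C * (norm x)^2"
proof (cases "x = 0")
  case True thus ?thesis by simp
next
  case False
  let ?f = "\<lambda>v. v \<bullet> ((C ** transpose C) *v v)"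
  have fq: "\<And>v. ?f v = (transpose C *v v) \<bullet> (transpose C *v v)"
    using quad_sandwich[where P=C and Q="mat 1"] by (simp add: matrix_mul_rid)
  have bdd: "bdd_below (?f ` {v. norm v = 1})"
    by (rule bdd_belowI[of _ 0]) (auto simp: fq)
  define v where "v = (1 / norm x) *\<^sub>R x"
  have nv: "norm v = 1" using False by (simp add: v_def)
  have "cmin C \<le> ?f v" unfolding cmin_def
    by (rule cInf_lower) (use bdd nv in auto)
  moreover have "?f x = (norm x)^2 * ?f v"
    using False by (simp add: v_def matrix_vector_mult_scaleR power2_eq_square field_simps)
  ultimately show ?thesis
    by (metis mult.commute mult_left_mono zero_le_power2)
qed

lemma cmin_pos:
  fixes C :: "real^'n^'n"
  assumes "rank C = CARD('n)"
  shows "cmin C > 0"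
proof -
  let ?f = "\<lambda>v. v \<bullet> ((C ** transpose C) *v v)"
  have fq: "\<And>v. ?f v = (transpose C *v v) \<bullet> (transpose C *v v)"
    using quad_sandwich[where P=C and Q="mat 1"] by (simp add: matrix_mul_rid)
  have inj: "inj ((*v) (transpose C))"
    using assms full_rank_injective rank_transpose by metis
  have S: "{v::real^'n. norm v = 1} = sphere 0 1" by auto
  have cpt: "compact {v::real^'n. norm v = 1}" unfolding S by simp
  obtain e :: "real^'n" where "norm e = 1" using vector_choose_size[of 1] by auto
  hence ne: "{v::real^'n. norm v = 1} \<noteq> {}" by auto
  have cont: "continuous_on {v::real^'n. norm v = 1} ?f"
    by (intro continuous_intros)
  obtain x0 where x0: "x0 \<in> {v. norm v = 1}" "\<forall>y\<in>{v. norm v = 1}. ?f x0 \<le> ?f y"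
    using continuous_attains_inf[OF cpt ne cont] by blast
  have bdd: "bdd_below (?f ` {v. norm v = 1})"
    by (rule bdd_belowI[of _ 0]) (auto simp: fq)
  have "cmin C = ?f x0" unfolding cmin_def
  proof (rule antisym)
    show "Inf (?f ` {v. norm v = 1}) \<le> ?f x0"
      by (rule cInf_lower) (use x0 bdd in auto)
    show "?f x0 \<le> Inf (?f ` {v. norm v = 1})"
      by (rule cInf_greatest) (use x0 ne in auto)
  qed
  moreover have "transpose C *v x0 \<noteq> 0"
  proof
    assume "transpose C *v x0 = 0"
    hence "transpose C *v x0 = transpose C *v 0" by simp
    hence "x0 = 0" using inj by (meson injD)
    thus False using x0 by simp
  qed
  ultimately show ?thesis by (simp add: fq)
qed



theorem proposition1:
  fixes mu :: "real^'n"
    and A B C Sigma0 :: "real^'n^'n"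
    and S0 :: "real^'n"
    and h :: "real \<Rightarrow> real \<Rightarrow> real"
    and q :: "real^'n \<Rightarrow> real^'n^'n \<Rightarrow> real"
    and gamma chi slow :: real
    and Z R S :: "nat \<Rightarrow> real^'n"
    and Sig :: "nat \<Rightarrow> real^'n^'n"
  assumes Sigma0_pd: "pos_def_mat Sigma0"
    and S0_pos: "\<forall>i. S0 $ i > 0"
    and gamma_pos: "gamma > 0"
    and Sig_0: "Sig 0 = Sigma0"
    and Sig_Suc: "\<forall>t. Sig (Suc t) = C ** transpose C + A ** Sig t ** transpose A
                        + B ** outer (Z (Suc t)) ** transpose B"
    and R_Suc: "\<forall>t. R (Suc t) = mu + Z (Suc t)"
    and S_0: "S 0 = S0"
    and S_Suc: "\<forall>t i. S (Suc t) $ i = h (S t $ i) (R (Suc t) $ i)"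
    and C_rank: "rank C = CARD('n)"
    and h_bdd: "bdd_above (range (\<lambda>p. \<bar>h (fst p) (snd p)\<bar>))"
    and slow_pos: "slow > 0"
    and h_low: "\<forall>s r. h s r \<ge> slow"
    and q_bounds: "\<forall>s p. 1 \<le> q s p \<and> q s p \<le> chi"
  shows
    "(\<forall>eps. eps > 0 \<and> eps * chi * hsup h < gamma * slow\<^sup>2 * cmin C \<longrightarrow>
        (let kappa = chi * hsup h / (gamma * slow\<^sup>2 * cmin C) in
         \<forall>t\<ge>1. opnorm (matrix_inv (mat 1 +
                  ((gamma / (eps * q (S t) (diag_mat (S t) ** Sig t ** diag_mat (S t))))
                     *\<^sub>R (diag_mat (S t) ** Sig t ** diag_mat (S t)))
                  ** matrix_inv (diag_mat (S t))))
               \<le> eps * kappa / (1 - eps\<^sup>2 * kappa\<^sup>2)))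
     \<and> (\<forall>delta. 0 \<le> delta \<and> delta < 1 \<longrightarrow>
        (\<exists>eps0>0. \<forall>eps. 0 < eps \<and> eps < eps0 \<longrightarrow>
          (\<exists>Delta<1. \<forall>t\<ge>1. delta * opnorm (matrix_inv (mat 1 +
                  ((gamma / (eps * q (S t) (diag_mat (S t) ** Sig t ** diag_mat (S t))))
                     *\<^sub>R (diag_mat (S t) ** Sig t ** diag_mat (S t)))
                  ** matrix_inv (diag_mat (S t)))) \<le> Delta)))"
  proof -
  let ?c = "cmin C"
  have cpos: "?c > 0" using cmin_pos[OF C_rank] .
  have psd: "\<forall>v. v \<bullet> (Sig t *v v) \<ge> 0" for t
  proof (induction t)
    case 0
    show ?case using Sigma0_pd unfolding Sig_0 pos_def_mat_def
      by (metis inner_zero_left order_le_less)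
  next
    case (Suc t)
    show ?case
    proof
      fix v
      have e: "v \<bullet> (Sig (Suc t) *v v) = v \<bullet> ((C ** transpose C) *v v)
          + v \<bullet> ((A ** Sig t ** transpose A) *v v)
          + v \<bullet> ((B ** outer (Z (Suc t)) ** transpose B) *v v)"
        using Sig_Suc by (simp add: matrix_vector_mult_add_rdistrib inner_add_right)
      have "v \<bullet> ((C ** transpose C) *v v) \<ge> 0"
        using quad_sandwich[where x=v and P=C and Q="mat 1"] by (simp add: matrix_mul_rid)
      moreover have "v \<bullet> ((A ** Sig t ** transpose A) *v v) \<ge> 0"
        using quad_sandwich[where x=v and P=A and Q="Sig t"] Suc by simp
      moreover have "v \<bullet> ((B ** outer (Z (Suc t)) ** transpose B) *v v) \<ge> 0"
        using quad_sandwich[where x=v and P=B and Q="outer (Z (Suc t))"] by (simp add: outer_quad)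
      ultimately show "v \<bullet> (Sig (Suc t) *v v) \<ge> 0" using e by linarith
    qed
  qed
  have Sig_low: "\<forall>v. v \<bullet> (Sig t *v v) \<ge> ?c * (norm v)^2" if t: "t \<ge> 1" for t
  proof
    fix v
    obtain k where k: "t = Suc k" using t by (cases t) auto
    have e: "v \<bullet> (Sig t *v v) = v \<bullet> ((C ** transpose C) *v v)
          + v \<bullet> ((A ** Sig k ** transpose A) *v v)
          + v \<bullet> ((B ** outer (Z (Suc k)) ** transpose B) *v v)"
      using Sig_Suc k by (simp add: matrix_vector_mult_add_rdistrib inner_add_right)
    have "v \<bullet> ((A ** Sig k ** transpose A) *v v) \<ge> 0"
      using quad_sandwich[where x=v and P=A and Q="Sig k"] psd by simp
    moreover have "v \<bullet> ((B ** outer (Z (Suc k)) ** transpose B) *v v) \<ge> 0"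
      using quad_sandwich[where x=v and P=B and Q="outer (Z (Suc k))"] by (simp add: outer_quad)
    ultimately show "v \<bullet> (Sig t *v v) \<ge> ?c * (norm v)^2"
      using e cmin_lower[where x=v and C=C] by linarith
  qed
  have S_low: "\<forall>i. S t $ i \<ge> slow" if t: "t \<ge> 1" for t
  proof -
    obtain k where k: "t = Suc k" using t by (cases t) auto
    show ?thesis using S_Suc h_low k by simp
  qed
  have H: "hsup h \<ge> slow"
  proof -
    have "\<bar>h (fst (0::real,0::real)) (snd (0::real,0::real))\<bar> \<le> hsup h"
      unfolding hsup_def by (rule cSUP_upper[OF _ h_bdd]) simp
    thus ?thesis using h_low[rule_format, of 0 0] by simp
  qed
  have chi1: "chi \<ge> 1" using q_bounds by (meson order_trans)
  have bound: "opnorm (matrix_inv (mat 1 +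
                  ((gamma / (eps * q (S t) (diag_mat (S t) ** Sig t ** diag_mat (S t))))
                     *\<^sub>R (diag_mat (S t) ** Sig t ** diag_mat (S t)))
                  ** matrix_inv (diag_mat (S t))))
         \<le> eps * chi / (gamma * ?c * slow)" if t: "t \<ge> 1" and eps: "eps > 0" for t eps
  proof -
    define d where "d = S t"
    define P where "P = diag_mat d ** Sig t ** diag_mat d"
    define qq where "qq = q d P"
    define a where "a = gamma / (eps * qq)"
    have qq: "1 \<le> qq" "qq \<le> chi" using q_bounds qq_def by auto
    have apos: "a > 0" using gamma_pos eps qq by (simp add: a_def)
    have dl: "\<forall>i. d $ i \<ge> slow" using S_low[OF t] d_def by simp
    have dnz: "\<forall>i. d $ i \<noteq> 0" using dl slow_pos by (metis less_le_trans less_irrefl)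
    have dd: "diag_mat d ** diag_mat (\<chi> i. 1 / d$i) = mat 1"
      using dnz by (simp add: diag_mul diag_mat_one[symmetric])
    have M: "mat 1 + (a *\<^sub>R P) ** matrix_inv (diag_mat d) = mat 1 + a *\<^sub>R (diag_mat d ** Sig t)"
      unfolding diag_inv[OF dnz] scaleR_mmul P_def
      by (simp add: matrix_mul_assoc[symmetric] dd matrix_mul_rid)
    have K: "a * ?c * slow > 0" using apos cpos slow_pos by simp
    have "opnorm (matrix_inv (mat 1 + a *\<^sub>R (diag_mat d ** Sig t))) \<le> 1 / (a * ?c * slow)"
      apply (rule opnorm_inv_bound[OF K])
      using key_lower[OF dl slow_pos apos Sig_low[OF t]] by blast
    also have "1 / (a * ?c * slow) = eps * qq / (gamma * ?c * slow)"
      unfolding a_def using eps qq gamma_pos by (simp add: field_simps)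
    also have "\<dots> \<le> eps * chi / (gamma * ?c * slow)"
      using qq eps gamma_pos cpos slow_pos
      by (intro divide_right_mono mult_left_mono) auto
    finally have fin: "opnorm (matrix_inv (mat 1 + a *\<^sub>R (diag_mat d ** Sig t))) \<le> eps * chi / (gamma * ?c * slow)" .
    have eq: "mat 1 + ((gamma / (eps * q (S t) (diag_mat (S t) ** Sig t ** diag_mat (S t))))
                     *\<^sub>R (diag_mat (S t) ** Sig t ** diag_mat (S t)))
                  ** matrix_inv (diag_mat (S t)) = mat 1 + a *\<^sub>R (diag_mat d ** Sig t)"
      using M unfolding a_def qq_def P_def d_def by simp
    show ?thesis unfolding eq using fin .
  qed
  show ?thesis
  proof (intro conjI allI impI)
    fix eps :: real
    assume as: "eps > 0 \<and> eps * chi * hsup h < gamma * slow\<^sup>2 * cmin C"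
    define kappa where "kappa = chi * hsup h / (gamma * slow\<^sup>2 * cmin C)"
    have den: "gamma * slow\<^sup>2 * cmin C > 0" using gamma_pos slow_pos cpos by simp
    have k0: "eps * kappa \<ge> 0" using as den chi1 H slow_pos unfolding kappa_def by simp
    have k1: "eps * kappa < 1" using as den unfolding kappa_def by (simp add: field_simps)
    have b1: "eps * chi / (gamma * ?c * slow) \<le> eps * kappa"
    proof -
      have "eps * chi / (gamma * ?c * slow) = eps * chi * slow / (gamma * slow\<^sup>2 * ?c)"
        using slow_pos by (simp add: power2_eq_square field_simps)
      also have "\<dots> \<le> eps * chi * hsup h / (gamma * slow\<^sup>2 * ?c)"
        using H as chi1 den by (intro divide_right_mono mult_left_mono) auto
      finally show ?thesis unfolding kappa_def by simp
    qed
    have b2: "eps * kappa \<le> eps * kappa / (1 - eps\<^sup>2 * kappa\<^sup>2)"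
    proof -
      have "(eps * kappa)^2 < 1" using k0 k1 by (simp add: power_less_one_iff abs_square_less_1)
      hence p: "0 < 1 - eps\<^sup>2 * kappa\<^sup>2" "1 - eps\<^sup>2 * kappa\<^sup>2 \<le> 1"
        by (auto simp: power_mult_distrib)
      thus ?thesis using k0 mult_left_mono[OF p(2) k0] by (simp add: le_divide_eq)
    qed
    show "let kappa = chi * hsup h / (gamma * slow\<^sup>2 * cmin C) in
         \<forall>t\<ge>1. opnorm (matrix_inv (mat 1 +
                  ((gamma / (eps * q (S t) (diag_mat (S t) ** Sig t ** diag_mat (S t))))
                     *\<^sub>R (diag_mat (S t) ** Sig t ** diag_mat (S t)))
                  ** matrix_inv (diag_mat (S t))))
               \<le> eps * kappa / (1 - eps\<^sup>2 * kappa\<^sup>2)"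
      unfolding Let_def kappa_def[symmetric]
      using bound as b1 b2 by (meson order_trans)
  next
    fix delta :: real
    assume dl: "0 \<le> delta \<and> delta < 1"
    define eps0 where "eps0 = gamma * ?c * slow / (2 * chi)"
    have e0: "eps0 > 0" using gamma_pos cpos slow_pos chi1 by (simp add: eps0_def)
    show "\<exists>eps0>0. \<forall>eps. 0 < eps \<and> eps < eps0 \<longrightarrow>
          (\<exists>Delta<1. \<forall>t\<ge>1. delta * opnorm (matrix_inv (mat 1 +
                  ((gamma / (eps * q (S t) (diag_mat (S t) ** Sig t ** diag_mat (S t))))
                     *\<^sub>R (diag_mat (S t) ** Sig t ** diag_mat (S t)))
                  ** matrix_inv (diag_mat (S t)))) \<le> Delta)"
    proof (rule exI[of _ eps0], rule conjI[OF e0], intro allI impI)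
      fix eps :: real assume ep: "0 < eps \<and> eps < eps0"
      have small: "eps * chi / (gamma * ?c * slow) \<le> 1/2"
      proof -
        have g: "gamma * ?c * slow > 0" using gamma_pos cpos slow_pos by simp
        have "eps * chi \<le> eps0 * chi" using ep chi1 by simp
        also have "\<dots> = gamma * ?c * slow / 2" using chi1 by (simp add: eps0_def)
        finally show ?thesis using g by (simp add: divide_le_eq)
      qed
      show "\<exists>Delta<1. \<forall>t\<ge>1. delta * opnorm (matrix_inv (mat 1 +
                  ((gamma / (eps * q (S t) (diag_mat (S t) ** Sig t ** diag_mat (S t))))
                     *\<^sub>R (diag_mat (S t) ** Sig t ** diag_mat (S t)))
                  ** matrix_inv (diag_mat (S t)))) \<le> Delta"
      proof (rule exI[of _ "1/2"], rule conjI, simp, intro allI impI)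
        fix t :: nat assume t: "1 \<le> t"
        let ?N = "opnorm (matrix_inv (mat 1 +
                  ((gamma / (eps * q (S t) (diag_mat (S t) ** Sig t ** diag_mat (S t))))
                     *\<^sub>R (diag_mat (S t) ** Sig t ** diag_mat (S t)))
                  ** matrix_inv (diag_mat (S t))))"
        have N: "?N \<le> 1/2" using bound[OF t, of eps] ep small by linarith
        have "delta * ?N \<le> delta * (1/2)" using dl N by (intro mult_left_mono) auto
        also have "\<dots> \<le> 1/2" using dl by simp
        finally show "delta * ?N \<le> 1/2" .
      qed
    qed
  qed
qed

end
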